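(* Assume each $f_j:\mathbb R^n\to\mathbb R$ ($1\le j\le m$) is continuously differentiable with $L_j$-Lipschitz gradient and $\mu_j$-strongly convex ($0\le\mu_j\le L_j<\infty$), and let $\mu=\min_j\mu_j$. Let $\gamma_0>0$, $x_0,x_1\in\mathbb R^n$, $\gamma(t)=\mu+(\gamma_0-\mu)e^{-t}$, and let $X,Z:[0,\infty)\to\mathbb R^n$ be locally absolutely continuous with $X(0)=x_0$, $Z(0)=x_0+x_1$, satisfying for almost every $t>0$ $$X'(t)=Z(t)-X(t),\qquad \gamma(t)Z'(t)\in\mu\big(X(t)-Z(t)\big)-\operatorname*{argmin}_{v\in C(X(t))}\langle X(t)-Z(t),v\rangle.$$ Then for every $1\le j\le m$ and all $t>0$, $$f_j(X(t))+\frac{\gamma(t)}{2}\|X'(t)\|^2+\frac12\int_0^t(\mu+3\gamma(s))\|X'(s)\|^2\,ds\le f_j(x_0)+\frac{\gamma_0}{2}\|x_1\|^2.$$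
   Context: $C(x)=\mathrm{conv}\{\nabla f_1(x),\dots,\nabla f_m(x)\}$. A function $g$ is $\mu_j$-strongly convex if $g(z)\ge g(y)+\langle\nabla g(y),z-y\rangle+\frac{\mu_j}{2}\|z-y\|^2$ for all $y,z$. Here $X'=Z-X$ is locally absolutely continuous, so $X''$ exists almost everywhere, and $X'(t)$ is understood as $Z(t)-X(t)$ for all $t$. *)

theory Defs
  imports "HOL-Analysis.Analysis"
begin

definition abs_continuous_on :: "real set \<Rightarrow> (real \<Rightarrow> 'a::real_normed_vector) \<Rightarrow> bool" where
  "abs_continuous_on S f \<longleftrightarrow>
     (\<forall>\<epsilon>>0. \<exists>\<delta>>0. \<forall>(I::nat set) a b.
        finite I \<longrightarrow>
        (\<forall>k\<in>I. a k \<le> b k \<and> {a k..b k} \<subseteq> S) \<longrightarrow>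
        (\<forall>k\<in>I. \<forall>l\<in>I. k \<noteq> l \<longrightarrow> {a k<..<b k} \<inter> {a l<..<b l} = {}) \<longrightarrow>
        (\<Sum>k\<in>I. b k - a k) < \<delta> \<longrightarrow>
        (\<Sum>k\<in>I. norm (f (b k) - f (a k))) < \<epsilon>)"

definition loc_abs_continuous_nonneg :: "(real \<Rightarrow> 'a::real_normed_vector) \<Rightarrow> bool" where
  "loc_abs_continuous_nonneg f \<longleftrightarrow> (\<forall>T\<ge>0. abs_continuous_on {0..T} f)"

definition strongly_convex_grad :: "real \<Rightarrow> ('a::real_inner \<Rightarrow> real) \<Rightarrow> ('a \<Rightarrow> 'a) \<Rightarrow> bool" where
  "strongly_convex_grad \<mu> g dg \<longleftrightarrow>
     (\<forall>y z. g z \<ge> g y + dg y \<bullet> (z - y) + \<mu> / 2 * (norm (z - y))\<^sup>2)"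

definition argmin_inner :: "'a::real_inner \<Rightarrow> 'a set \<Rightarrow> 'a set" where
  "argmin_inner w C = {v\<in>C. \<forall>u\<in>C. w \<bullet> v \<le> w \<bullet> u}"

end

theory Submission imports Defs begin

definition acprop :: "real set \<Rightarrow> (real \<Rightarrow> 'a::real_normed_vector) \<Rightarrow> real \<Rightarrow> real \<Rightarrow> bool" where
  "acprop S g \<epsilon> \<delta> \<longleftrightarrow> (\<forall>(I::nat set) a b.
        finite I \<longrightarrow>
        (\<forall>k\<in>I. a k \<le> b k \<and> {a k..b k} \<subseteq> S) \<longrightarrow>
        (\<forall>k\<in>I. \<forall>l\<in>I. k \<noteq> l \<longrightarrow> {a k<..<b k} \<inter> {a l<..<b l} = {}) \<longrightarrow>
        (\<Sum>k\<in>I. b k - a k) < \<delta> \<longrightarrow>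
        (\<Sum>k\<in>I. norm (g (b k) - g (a k))) < \<epsilon>)"

lemma ac_iff: "abs_continuous_on S g \<longleftrightarrow> (\<forall>\<epsilon>>0. \<exists>\<delta>>0. acprop S g \<epsilon> \<delta>)"
  unfolding abs_continuous_on_def acprop_def by (rule refl)

lemma acpropD:
  assumes "acprop S g \<epsilon> \<delta>" "finite (I::nat set)" "\<forall>k\<in>I. a k \<le> b k \<and> {a k..b k} \<subseteq> S"
    "\<forall>k\<in>I. \<forall>l\<in>I. k \<noteq> l \<longrightarrow> {a k<..<b k} \<inter> {a l<..<b l} = {}"
    "(\<Sum>k\<in>I. b k - a k) < \<delta>"
  shows "(\<Sum>k\<in>I. norm (g (b k) - g (a k))) < \<epsilon>"
proof -
  have "finite I \<longrightarrow>
        (\<forall>k\<in>I. a k \<le> b k \<and> {a k..b k} \<subseteq> S) \<longrightarrow>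
        (\<forall>k\<in>I. \<forall>l\<in>I. k \<noteq> l \<longrightarrow> {a k<..<b k} \<inter> {a l<..<b l} = {}) \<longrightarrow>
        (\<Sum>k\<in>I. b k - a k) < \<delta> \<longrightarrow>
        (\<Sum>k\<in>I. norm (g (b k) - g (a k))) < \<epsilon>"
    using assms(1) unfolding acprop_def by (elim allE)
  then show ?thesis using assms(2-5) by simp
qed

lemma acpropI:
  assumes "\<And>(I::nat set) a b. finite I \<Longrightarrow> (\<forall>k\<in>I. a k \<le> b k \<and> {a k..b k} \<subseteq> S) \<Longrightarrow>
    (\<forall>k\<in>I. \<forall>l\<in>I. k \<noteq> l \<longrightarrow> {a k<..<b k} \<inter> {a l<..<b l} = {}) \<Longrightarrow>
    (\<Sum>k\<in>I. b k - a k) < \<delta> \<Longrightarrow> (\<Sum>k\<in>I. norm (g (b k) - g (a k))) < \<epsilon>"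
  shows "acprop S g \<epsilon> \<delta>"
  unfolding acprop_def
proof (intro allI impI)
  fix I :: "nat set" and a b
  assume "finite I" "\<forall>k\<in>I. a k \<le> b k \<and> {a k..b k} \<subseteq> S"
    "\<forall>k\<in>I. \<forall>l\<in>I. k \<noteq> l \<longrightarrow> {a k<..<b k} \<inter> {a l<..<b l} = {}"
    "(\<Sum>k\<in>I. b k - a k) < \<delta>"
  then show "(\<Sum>k\<in>I. norm (g (b k) - g (a k))) < \<epsilon>" by (rule assms)
qed

lemma acE:
  assumes "abs_continuous_on S g" "\<epsilon> > 0"
  obtains \<delta> where "\<delta> > 0" "acprop S g \<epsilon> \<delta>"
  using assms unfolding ac_iff by blast

lemma acI:
  assumes "\<And>\<epsilon>. \<epsilon> > 0 \<Longrightarrow> \<exists>\<delta>>0. acprop S g \<epsilon> \<delta>"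
  shows "abs_continuous_on S g"
  using assms unfolding ac_iff by blast

lemma ac_family':
  fixes g :: "real \<Rightarrow> 'a::real_normed_vector"
  assumes "abs_continuous_on S g" "\<epsilon> > 0"
  shows "\<exists>\<delta>>0. \<forall>(P::'i set) lo hi. finite P \<longrightarrow> (\<forall>k\<in>P. lo k \<le> hi k \<and> {lo k..hi k} \<subseteq> S) \<longrightarrow>
     (\<forall>k\<in>P. \<forall>l\<in>P. k \<noteq> l \<longrightarrow> {lo k<..<hi k} \<inter> {lo l<..<hi l} = {}) \<longrightarrow>
     (\<Sum>k\<in>P. hi k - lo k) < \<delta> \<longrightarrow> (\<Sum>k\<in>P. norm (g (hi k) - g (lo k))) < \<epsilon>"
proof -
  obtain \<delta> where d: "\<delta> > 0" and D: "acprop S g \<epsilon> \<delta>"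
    using acE[OF assms] by blast
  show ?thesis
  proof (intro exI[of _ \<delta>] conjI allI impI d)
    fix P :: "'i set" and lo hi
    assume P: "finite P" "\<forall>k\<in>P. lo k \<le> hi k \<and> {lo k..hi k} \<subseteq> S"
      "\<forall>k\<in>P. \<forall>l\<in>P. k \<noteq> l \<longrightarrow> {lo k<..<hi k} \<inter> {lo l<..<hi l} = {}"
      "(\<Sum>k\<in>P. hi k - lo k) < \<delta>"
    obtain h where h: "bij_betw h {0..<card P} P"
      using ex_bij_betw_nat_finite[OF P(1)] by blast
    have inj: "\<And>k l. k \<in> {0..<card P} \<Longrightarrow> l \<in> {0..<card P} \<Longrightarrow> k \<noteq> l \<Longrightarrow> h k \<noteq> h l"
      using h unfolding bij_betw_def inj_on_def by blast
    have hin: "\<And>k. k \<in> {0..<card P} \<Longrightarrow> h k \<in> P" using h by (simp add: bij_betw_apply)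
    have "(\<Sum>k\<in>{0..<card P}. norm (g ((hi \<circ> h) k) - g ((lo \<circ> h) k))) < \<epsilon>"
    proof (rule acpropD[OF D])
      show "(\<Sum>k\<in>{0..<card P}. (hi \<circ> h) k - (lo \<circ> h) k) < \<delta>"
        using P(4) sum.reindex_bij_betw[OF h, of "\<lambda>k. hi k - lo k"] by simp
      show "finite {0..<card P}" by simp
      show "\<forall>k\<in>{0..<card P}. (lo \<circ> h) k \<le> (hi \<circ> h) k \<and> {(lo \<circ> h) k..(hi \<circ> h) k} \<subseteq> S"
        using P(2) hin by simp
      show "\<forall>k\<in>{0..<card P}. \<forall>l\<in>{0..<card P}. k \<noteq> l \<longrightarrow> {(lo \<circ> h) k<..<(hi \<circ> h) k} \<inter> {(lo \<circ> h) l<..<(hi \<circ> h) l} = {}"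
      proof (intro ballI impI)
      fix k l assume k: "k \<in> {0..<card P}" and l: "l \<in> {0..<card P}" and kl: "k \<noteq> l"
      have "h k \<in> P" "h l \<in> P" "h k \<noteq> h l" using hin k l inj kl by auto
      then have "{lo (h k)<..<hi (h k)} \<inter> {lo (h l)<..<hi (h l)} = {}" using P(3) by blast
      then show "{(lo \<circ> h) k<..<(hi \<circ> h) k} \<inter> {(lo \<circ> h) l<..<(hi \<circ> h) l} = {}" by simp
      qed
    qed
    then show "(\<Sum>k\<in>P. norm (g (hi k) - g (lo k))) < \<epsilon>"
      using sum.reindex_bij_betw[OF h, of "\<lambda>k. norm (g (hi k) - g (lo k))"] by simp
  qed
qed

lemma ac_imp_continuous:
  fixes g :: "real \<Rightarrow> 'a::real_normed_vector"
  assumes "abs_continuous_on {c..d} g"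
  shows "continuous_on {c..d} g"
  unfolding continuous_on_iff
proof (intro ballI allI impI)
  fix x e :: real assume x: "x \<in> {c..d}" and e: "e > 0"
  obtain \<delta> where d: "\<delta> > 0" and D: "acprop {c..d} g e \<delta>"
    using acE[OF assms e] by blast
  show "\<exists>\<delta>>0. \<forall>y\<in>{c..d}. dist y x < \<delta> \<longrightarrow> dist (g y) (g x) < e"
  proof (intro exI[of _ \<delta>] conjI ballI impI d)
    fix y assume y: "y \<in> {c..d}" "dist y x < \<delta>"
    have "(\<Sum>k\<in>{0::nat}. norm (g ((\<lambda>_. max x y) k) - g ((\<lambda>_. min x y) k))) < e"
      by (rule acpropD[OF D]) (use x y in \<open>auto simp: dist_real_def\<close>)
    then show "dist (g y) (g x) < e"
      by (cases "x \<le> y") (auto simp: dist_norm norm_minus_commute max_def min_def)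
  qed
qed

lemma ac_compose:
  fixes g :: "real \<Rightarrow> 'a::real_normed_vector" and h :: "'a \<Rightarrow> 'b::real_normed_vector"
  assumes "abs_continuous_on S g" "B \<ge> 0"
    "\<And>x y. x \<in> S \<Longrightarrow> y \<in> S \<Longrightarrow> norm (h (g x) - h (g y)) \<le> B * norm (g x - g y)"
  shows "abs_continuous_on S (\<lambda>t. h (g t))"
proof (rule acI)
  fix e :: real assume e: "e > 0"
  have e': "e / (B + 1) > 0" using e assms(2) by simp
  obtain \<delta> where d: "\<delta> > 0" and D: "acprop S g (e / (B + 1)) \<delta>"
    using acE[OF assms(1) e'] by blast
  have "acprop S (\<lambda>t. h (g t)) e \<delta>"
  proof (rule acpropI)
    fix I :: "nat set" and a b
    assume H: "finite I" "\<forall>k\<in>I. a k \<le> b k \<and> {a k..b k} \<subseteq> S"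
      "\<forall>k\<in>I. \<forall>l\<in>I. k \<noteq> l \<longrightarrow> {a k<..<b k} \<inter> {a l<..<b l} = {}"
      "(\<Sum>k\<in>I. b k - a k) < \<delta>"
    have "(\<Sum>k\<in>I. norm (h (g (b k)) - h (g (a k)))) \<le> (\<Sum>k\<in>I. B * norm (g (b k) - g (a k)))"
      by (rule sum_mono) (use H(2) assms(3) in \<open>force\<close>)
    also have "\<dots> = B * (\<Sum>k\<in>I. norm (g (b k) - g (a k)))" by (simp add: sum_distrib_left)
    also have "\<dots> \<le> B * (e / (B + 1))"
      using acpropD[OF D H] assms(2) by (intro mult_left_mono) auto
    also have "\<dots> < e" using e assms(2) by (simp add: field_simps)
    finally show "(\<Sum>k\<in>I. norm (h (g (b k)) - h (g (a k)))) < e" .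
  qed
  then show "\<exists>\<delta>>0. acprop S (\<lambda>t. h (g t)) e \<delta>" using d by blast
qed

lemma id_ac: "abs_continuous_on S (\<lambda>t::real. t)"
proof (rule acI)
  fix e :: real assume e: "e > 0"
  have "acprop S (\<lambda>t. t) e e"
  proof (rule acpropI)
    fix I :: "nat set" and a b
    assume H: "finite I" "\<forall>k\<in>I. a k \<le> b k \<and> {a k..b k} \<subseteq> S"
      "\<forall>k\<in>I. \<forall>l\<in>I. k \<noteq> l \<longrightarrow> {a k<..<b k} \<inter> {a l<..<b l} = {}"
      "(\<Sum>k\<in>I. b k - a k) < e"
    have "(\<Sum>k\<in>I. norm (b k - a k)) = (\<Sum>k\<in>I. b k - a k)"
      by (rule sum.cong) (use H(2) in auto)
    then show "(\<Sum>k\<in>I. norm (b k - a k)) < e" using H(4) by simp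
  qed
  then show "\<exists>\<delta>>0. acprop S (\<lambda>t. t) e \<delta>" using e by blast
qed

lemma lipschitz_imp_ac:
  fixes g :: "real \<Rightarrow> 'a::real_normed_vector"
  assumes "B \<ge> 0" "\<And>x y. x \<in> S \<Longrightarrow> y \<in> S \<Longrightarrow> norm (g x - g y) \<le> B * norm (x - y)"
  shows "abs_continuous_on S g"
  using ac_compose[OF id_ac assms(1), of S g] assms(2) by simp

lemma ac_add:
  fixes f g :: "real \<Rightarrow> 'a::real_normed_vector"
  assumes "abs_continuous_on S f" "abs_continuous_on S g"
  shows "abs_continuous_on S (\<lambda>t. f t + g t)"
proof (rule acI)
  fix e :: real assume e: "e > 0"
  then have e2: "e/2 > 0" by simp
  obtain d1 where d1: "d1 > 0" and D1: "acprop S f (e/2) d1"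
    using acE[OF assms(1) e2] by blast
  obtain d2 where d2: "d2 > 0" and D2: "acprop S g (e/2) d2"
    using acE[OF assms(2) e2] by blast
  have "acprop S (\<lambda>t. f t + g t) e (min d1 d2)"
  proof (rule acpropI)
    fix I :: "nat set" and a b
    assume H: "finite I" "\<forall>k\<in>I. a k \<le> b k \<and> {a k..b k} \<subseteq> S"
      "\<forall>k\<in>I. \<forall>l\<in>I. k \<noteq> l \<longrightarrow> {a k<..<b k} \<inter> {a l<..<b l} = {}"
      "(\<Sum>k\<in>I. b k - a k) < min d1 d2"
    have "(\<Sum>k\<in>I. norm (f (b k) + g (b k) - (f (a k) + g (a k)))) \<le>
          (\<Sum>k\<in>I. norm (f (b k) - f (a k)) + norm (g (b k) - g (a k)))"
    proof (rule sum_mono)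
      fix k
      have "f (b k) + g (b k) - (f (a k) + g (a k)) = (f (b k) - f (a k)) + (g (b k) - g (a k))"
        by (simp add: algebra_simps)
      then show "norm (f (b k) + g (b k) - (f (a k) + g (a k))) \<le> norm (f (b k) - f (a k)) + norm (g (b k) - g (a k))"
        by (metis norm_triangle_ineq)
    qed
    also have "\<dots> < e/2 + e/2"
      unfolding sum.distrib using acpropD[OF D1 H(1-3)] acpropD[OF D2 H(1-3)] H(4) by (intro add_strict_mono) auto
    finally show "(\<Sum>k\<in>I. norm (f (b k) + g (b k) - (f (a k) + g (a k)))) < e" by simp
  qed
  then show "\<exists>\<delta>>0. acprop S (\<lambda>t. f t + g t) e \<delta>" using d1 d2 by (intro exI[of _ "min d1 d2"]) auto
qed

lemma ac_scale:
  fixes f :: "real \<Rightarrow> 'a::real_normed_vector"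
  assumes "abs_continuous_on S f"
  shows "abs_continuous_on S (\<lambda>t. c *\<^sub>R f t)"
  using ac_compose[OF assms, of "\<bar>c\<bar>" "\<lambda>x. c *\<^sub>R x"]
  by (simp add: scaleR_diff_right[symmetric])

lemma ac_diff:
  fixes f g :: "real \<Rightarrow> 'a::real_normed_vector"
  assumes "abs_continuous_on S f" "abs_continuous_on S g"
  shows "abs_continuous_on S (\<lambda>t. f t - g t)"
  using ac_add[OF assms(1) ac_scale[OF assms(2), of "-1"]] by simp

lemma ac_mult:
  fixes f g :: "real \<Rightarrow> real"
  assumes "abs_continuous_on {c..d} f" "abs_continuous_on {c..d} g"
  shows "abs_continuous_on {c..d} (\<lambda>t. f t * g t)"
proof -
  let ?h = "\<lambda>t. (f t, g t)"
  have "abs_continuous_on {c..d} ?h"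
  proof -
    have "abs_continuous_on {c..d} (\<lambda>t. (f t, 0::real))"
      using ac_compose[OF assms(1), of 1 "\<lambda>x. (x, 0::real)"] by (simp add: norm_Pair)
    moreover have "abs_continuous_on {c..d} (\<lambda>t. (0::real, g t))"
      using ac_compose[OF assms(2), of 1 "\<lambda>x. (0::real, x)"] by (simp add: norm_Pair)
    ultimately show ?thesis using ac_add by fastforce
  qed
  moreover have "compact (?h ` {c..d})"
    using ac_imp_continuous[OF calculation] by (intro compact_continuous_image) auto
  then obtain M where M: "M > 0" "\<And>x. x \<in> ?h ` {c..d} \<Longrightarrow> norm x \<le> M"
    using compact_imp_bounded bounded_pos by metis
  have "\<And>x y. x \<in> {c..d} \<Longrightarrow> y \<in> {c..d} \<Longrightarrow>
     norm ((\<lambda>p. fst p * snd p) (?h x) - (\<lambda>p. fst p * snd p) (?h y)) \<le> (2*M) * norm (?h x - ?h y)"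
  proof -
    fix x y assume xy: "x \<in> {c..d}" "y \<in> {c..d}"
    have a: "\<bar>f x\<bar> \<le> M" "\<bar>g y\<bar> \<le> M"
      using M(2)[of "?h x"] M(2)[of "?h y"] xy by (auto simp: norm_Pair real_sqrt_ge_abs1 real_sqrt_ge_abs2 intro: order_trans[rotated])
    have b: "\<bar>f x - f y\<bar> \<le> norm (?h x - ?h y)" "\<bar>g x - g y\<bar> \<le> norm (?h x - ?h y)"
      by (auto simp: norm_Pair real_sqrt_ge_abs1 real_sqrt_ge_abs2)
    have "f x * g x - f y * g y = f x * (g x - g y) + g y * (f x - f y)" by algebra
    then have "\<bar>f x * g x - f y * g y\<bar> \<le> \<bar>f x\<bar> * \<bar>g x - g y\<bar> + \<bar>g y\<bar> * \<bar>f x - f y\<bar>"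
      by (metis abs_mult abs_triangle_ineq)
    also have "\<dots> \<le> M * norm (?h x - ?h y) + M * norm (?h x - ?h y)"
      using a b by (intro add_mono mult_mono) auto
    finally show "norm ((\<lambda>p. fst p * snd p) (?h x) - (\<lambda>p. fst p * snd p) (?h y)) \<le> (2*M) * norm (?h x - ?h y)"
      by simp
  qed
  from ac_compose[OF calculation _ this] M show ?thesis by simp
qed


lemma tdiv_interval:
  assumes "p tagged_division_of {a..b::real}" "(x,K) \<in> p"
  shows "Inf K \<le> Sup K \<and> K = {Inf K..Sup K} \<and> x \<in> K \<and> K \<subseteq> {a..b}"
proof -
  obtain u v where K: "K = cbox u v" using tagged_division_ofD(4)[OF assms] by blast
  have x: "x \<in> K" using tagged_division_ofD(2)[OF assms] .
  then have uv: "u \<le> v" using K by auto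
  then show ?thesis using K x tagged_division_ofD(3)[OF assms] by auto
qed

lemma ac_mono:
  fixes g g' :: "real \<Rightarrow> real"
  assumes ab: "a \<le> b" and ac: "abs_continuous_on {a..b} g" and N: "negligible N"
    and der: "\<And>x. x \<in> {a..b} - N \<Longrightarrow> (g has_real_derivative g' x) (at x within {a..b})"
    and neg: "\<And>x. x \<in> {a..b} - N \<Longrightarrow> g' x \<le> 0"
  shows "g b \<le> g a"
proof -
  have key: "g b - g a \<le> \<epsilon> * (1 + (b - a))" if \<epsilon>: "\<epsilon> > 0" for \<epsilon>
  proof -
    obtain \<delta> where \<delta>: "\<delta> > 0" and D0: "\<forall>(P::(real \<times> real set) set) lo hi. finite P \<longrightarrow>
       (\<forall>k\<in>P. lo k \<le> hi k \<and> {lo k..hi k} \<subseteq> {a..b}) \<longrightarrow>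
       (\<forall>k\<in>P. \<forall>l\<in>P. k \<noteq> l \<longrightarrow> {lo k<..<hi k} \<inter> {lo l<..<hi l} = {}) \<longrightarrow>
       (\<Sum>k\<in>P. hi k - lo k) < \<delta> \<longrightarrow> (\<Sum>k\<in>P. norm (g (hi k) - g (lo k))) < \<epsilon>"
      using ac_family'[OF ac \<epsilon>] by (elim exE conjE) (rule that)
    note D = D0[rule_format (no_asm)]
    obtain T where T: "open T" "N \<subseteq> T" "T - N \<in> lmeasurable" "emeasure lebesgue (T - N) < ennreal \<delta>"
      using sets_lebesgue_outer_open[OF negligible_imp_sets[OF N] \<delta>] by blast
    have symd: "negligible (sym_diff (T - N) T)"
      by (rule negligible_subset[OF N]) auto
    have Tm: "T \<in> lmeasurable" using lmeasurable_negligible_symdiff[OF T(3) symd] .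
    have "measure lebesgue T = measure lebesgue (T - N)"
      using measure_negligible_symdiff[OF T(3) symd] .
    also have "\<dots> < \<delta>"
      using T(4) emeasure_eq_measure2[OF T(3)] \<delta> by (simp add: ennreal_less_iff)
    finally have Tmeas: "measure lebesgue T < \<delta>" .
    have gauge_ex: "\<forall>x. \<exists>r. r > 0 \<and> (x \<in> N \<longrightarrow> ball x r \<subseteq> T) \<and>
       (x \<in> {a..b} - N \<longrightarrow> (\<forall>y\<in>{a..b}. dist y x < r \<longrightarrow> \<bar>g y - g x - g' x * (y - x)\<bar> \<le> \<epsilon> * \<bar>y - x\<bar>))"
    proof
      fix x
      show "\<exists>r. r > 0 \<and> (x \<in> N \<longrightarrow> ball x r \<subseteq> T) \<and>
       (x \<in> {a..b} - N \<longrightarrow> (\<forall>y\<in>{a..b}. dist y x < r \<longrightarrow> \<bar>g y - g x - g' x * (y - x)\<bar> \<le> \<epsilon> * \<bar>y - x\<bar>))"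
      proof (cases "x \<in> N")
        case True
        then obtain r where "r > 0" "ball x r \<subseteq> T" using T(1,2) openE by blast
        then show ?thesis using True by blast
      next
        case False
        show ?thesis
        proof (cases "x \<in> {a..b}")
          case True
          have "(g has_derivative (*) (g' x)) (at x within {a..b})"
            using der[of x] False True by (simp add: has_field_derivative_def)
          then obtain r where r: "r > 0" "\<forall>y\<in>{a..b}. norm (y - x) < r \<longrightarrow>
               norm (g y - g x - g' x * (y - x)) \<le> \<epsilon> * norm (y - x)"
            using \<epsilon> unfolding has_derivative_within_alt by blast
          then show ?thesis using False by (intro exI[of _ r]) (auto simp: dist_real_def)
        next
          case False2: False
          then show ?thesis using False by (intro exI[of _ 1]) auto
        qed
      qed
    qed
    obtain r where r: "\<forall>x. r x > 0 \<and> (x \<in> N \<longrightarrow> ball x (r x) \<subseteq> T) \<and>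
       (x \<in> {a..b} - N \<longrightarrow> (\<forall>y\<in>{a..b}. dist y x < r x \<longrightarrow> \<bar>g y - g x - g' x * (y - x)\<bar> \<le> \<epsilon> * \<bar>y - x\<bar>))"
      using choice[OF gauge_ex] by blast
    have gauge: "gauge (\<lambda>x. ball x (r x))" using r by (intro gauge_ball_dependent) blast
    obtain p where p: "p tagged_division_of {a..b}" "(\<lambda>x. ball x (r x)) fine p"
      using fine_division_exists_real[OF gauge] by blast
    have fin: "finite p" using p(1) by blast
    have ivp: "Inf K \<le> Sup K \<and> K = {Inf K..Sup K} \<and> x \<in> K \<and> K \<subseteq> {a..b} \<and> K \<subseteq> ball x (r x)"
      if "(x,K) \<in> p" for x K
      using tdiv_interval[OF p(1) that] p(2) that unfolding fine_def by blast
    have ivuv: "\<exists>u v. u \<le> v \<and> K = {u..v} \<and> Inf K = u \<and> Sup K = v \<and> x \<in> {u..v} \<and> {u..v} \<subseteq> {a..b}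
        \<and> {u..v} \<subseteq> ball x (r x)" if "(x,K) \<in> p" for x K
    proof -
      have I: "Inf K \<le> Sup K" "K = {Inf K..Sup K}" "x \<in> K" "K \<subseteq> {a..b}" "K \<subseteq> ball x (r x)"
        using ivp[OF that] by blast+
      show ?thesis
        by (rule exI[of _ "Inf K"], rule exI[of _ "Sup K"]) (metis I)
    qed
    have "g b - g a = (\<Sum>(x,K)\<in>p. g (Sup K) - g (Inf K))"
      using additive_tagged_division_1[OF ab p(1), of g] by simp
    also have "\<dots> = (\<Sum>k\<in>p. g (Sup (snd k)) - g (Inf (snd k)))"
      by (simp add: split_def)
    finally have tot: "g b - g a = (\<Sum>k\<in>p. g (Sup (snd k)) - g (Inf (snd k)))" .
    define p1 where "p1 = {k\<in>p. fst k \<in> N}"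
    define p2 where "p2 = {k\<in>p. fst k \<notin> N}"
    have p12: "p = p1 \<union> p2" "p1 \<inter> p2 = {}" "finite p1" "finite p2" "p1 \<subseteq> p" "p2 \<subseteq> p"
      using fin unfolding p1_def p2_def by auto
    have split: "(\<Sum>k\<in>p. g (Sup (snd k)) - g (Inf (snd k))) =
        (\<Sum>k\<in>p1. g (Sup (snd k)) - g (Inf (snd k))) + (\<Sum>k\<in>p2. g (Sup (snd k)) - g (Inf (snd k)))"
      unfolding p12(1) by (rule sum.union_disjoint[OF p12(3,4,2)])
    have good: "g (Sup K) - g (Inf K) \<le> \<epsilon> * (Sup K - Inf K)" if xK: "(x,K) \<in> p" "x \<notin> N" for x K
    proof -
      obtain u v where uv: "u \<le> v" "K = {u..v}" "Inf K = u" "Sup K = v" "x \<in> {u..v}" "{u..v} \<subseteq> {a..b}"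
         "{u..v} \<subseteq> ball x (r x)"
        using ivuv[OF xK(1)] by blast
      have ux: "u \<le> x" "x \<le> v" using uv(5) by auto
      have uab: "u \<in> {a..b}" "v \<in> {a..b}" "x \<in> {a..b}" using uv(1,5,6) by auto
      have du: "dist u x < r x" "dist v x < r x"
        using uv(1,7) by (auto simp: dist_commute subset_iff)
      have R: "\<forall>y\<in>{a..b}. dist y x < r x \<longrightarrow> \<bar>g y - g x - g' x * (y - x)\<bar> \<le> \<epsilon> * \<bar>y - x\<bar>"
        using r xK(2) uab(3) by blast
      have e1: "\<bar>g v - g x - g' x * (v - x)\<bar> \<le> \<epsilon> * (v - x)"
        using R uab du ux by auto
      have e2: "\<bar>g u - g x - g' x * (u - x)\<bar> \<le> \<epsilon> * (x - u)"
        using R uab du ux by auto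
      have gn: "g' x \<le> 0" using neg uab(3) xK(2) by blast
      have "g' x * (v - u) \<le> 0" using gn ux by (simp add: mult_nonpos_nonneg)
      moreover have "g' x * (v - x) - g' x * (u - x) = g' x * (v - u)" by algebra
      moreover have "\<epsilon> * (v - x) + \<epsilon> * (x - u) = \<epsilon> * (v - u)" by algebra
      ultimately have "g v - g u \<le> \<epsilon> * (v - u)" using e1 e2 by linarith
      then show ?thesis using uv(3,4) by simp
    qed
    have clen: "measure lborel K = Sup K - Inf K" "measure lebesgue K = Sup K - Inf K" "Inf K \<le> Sup K"
       "K \<in> lmeasurable" "interior K = {Inf K<..<Sup K}" "negligible (K - interior K)"
      if xK: "(x,K) \<in> p" for x K
    proof -
      obtain u v where uv: "u \<le> v" "K = {u..v}" "Inf K = u" "Sup K = v"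
        using ivuv[OF xK] by blast
      show "measure lborel K = Sup K - Inf K" "measure lebesgue K = Sup K - Inf K" "Inf K \<le> Sup K"
        "K \<in> lmeasurable" "interior K = {Inf K<..<Sup K}"
        using uv by simp_all
      have "negligible (cbox u v - box u v)" by (rule negligible_frontier_interval)
      then show "negligible (K - interior K)" using uv by simp
    qed
    have sum2: "(\<Sum>k\<in>p2. g (Sup (snd k)) - g (Inf (snd k))) \<le> \<epsilon> * (b - a)"
    proof -
      have "(\<Sum>k\<in>p2. g (Sup (snd k)) - g (Inf (snd k))) \<le> (\<Sum>k\<in>p2. \<epsilon> * (Sup (snd k) - Inf (snd k)))"
      proof (rule sum_mono)
        fix k assume "k \<in> p2"
        then have "(fst k, snd k) \<in> p" "fst k \<notin> N" unfolding p2_def by auto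
        then show "g (Sup (snd k)) - g (Inf (snd k)) \<le> \<epsilon> * (Sup (snd k) - Inf (snd k))"
          by (rule good)
      qed
      also have "\<dots> \<le> (\<Sum>k\<in>p. \<epsilon> * (Sup (snd k) - Inf (snd k)))"
      proof (rule sum_mono2[OF fin p12(6)])
        fix k assume "k \<in> p - p2"
        then have "(fst k, snd k) \<in> p" by simp
        from clen(3)[OF this] show "0 \<le> \<epsilon> * (Sup (snd k) - Inf (snd k))" using \<epsilon> by simp
      qed
      also have "\<dots> = \<epsilon> * (\<Sum>k\<in>p. measure lborel (snd k))"
        unfolding sum_distrib_left
      proof (rule sum.cong[OF refl])
        fix k assume "k \<in> p"
        then have "(fst k, snd k) \<in> p" by simp
        from clen(1)[OF this] show "\<epsilon> * (Sup (snd k) - Inf (snd k)) = \<epsilon> * measure lborel (snd k)" by simp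
      qed
      also have "(\<Sum>k\<in>p. measure lborel (snd k)) = b - a"
        using additive_content_tagged_division[of p a b] p(1) ab by (simp add: split_def)
      finally show ?thesis .
    qed
    have meas1: "(\<Sum>k\<in>p1. Sup (snd k) - Inf (snd k)) < \<delta>"
    proof -
      have eqm: "(\<Sum>k\<in>p1. Sup (snd k) - Inf (snd k)) = (\<Sum>k\<in>p1. measure lebesgue (snd k))"
      proof (rule sum.cong[OF refl])
        fix k assume "k \<in> p1"
        then have "(fst k, snd k) \<in> p" using p12 by auto
        from clen(2)[OF this] show "Sup (snd k) - Inf (snd k) = measure lebesgue (snd k)" by simp
      qed
      have lm: "snd k \<in> lmeasurable" if "k \<in> p1" for k
      proof -
        have "(fst k, snd k) \<in> p" using that p12 by auto
        from clen(4)[OF this] show ?thesis .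
      qed
      have pw: "pairwise (\<lambda>k l. negligible (snd k \<inter> snd l)) p1"
        unfolding pairwise_def
      proof (intro ballI impI)
        fix k l assume k: "k \<in> p1" and l: "l \<in> p1" and kl: "k \<noteq> l"
        obtain x K where kk: "k = (x,K)" by fastforce
        obtain y L where ll: "l = (y,L)" by fastforce
        have kp: "(x,K) \<in> p" and lp: "(y,L) \<in> p" using k l p12 kk ll by auto
        have dis: "interior K \<inter> interior L = {}"
          using tagged_division_ofD(5)[OF p(1) kp lp] kl kk ll by auto
        have "K \<inter> L \<subseteq> (K - interior K) \<union> (L - interior L)" using dis by blast
        moreover have "negligible ((K - interior K) \<union> (L - interior L))"
          using clen(6)[OF kp] clen(6)[OF lp] by (rule negligible_Un)
        ultimately have "negligible (K \<inter> L)"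
          by (rule negligible_subset[rotated])
        then show "negligible (snd k \<inter> snd l)" using kk ll by simp
      qed
      have "(\<Sum>k\<in>p1. measure lebesgue (snd k)) = measure lebesgue (\<Union>(snd ` p1))"
        using measure_negligible_finite_Union_image[OF p12(3) lm pw] by simp
      also have "\<dots> \<le> measure lebesgue T"
      proof (rule measure_mono_fmeasurable[OF _ _ Tm])
        show "\<Union>(snd ` p1) \<subseteq> T"
        proof
          fix y assume "y \<in> \<Union>(snd ` p1)"
          then obtain k where k: "k \<in> p1" "y \<in> snd k" by blast
          then have kp: "(fst k, snd k) \<in> p" and kN: "fst k \<in> N" unfolding p1_def by auto
          have "snd k \<subseteq> ball (fst k) (r (fst k))" using ivp[OF kp] by blast
          moreover have "ball (fst k) (r (fst k)) \<subseteq> T" using r kN by blast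
          ultimately show "y \<in> T" using k by blast
        qed
        show "\<Union>(snd ` p1) \<in> sets lebesgue"
          using lm p12(3) by (intro sets.finite_UN) auto
      qed
      finally show ?thesis using eqm Tmeas by linarith
    qed
    have sum1: "(\<Sum>k\<in>p1. g (Sup (snd k)) - g (Inf (snd k))) < \<epsilon>"
    proof -
      have "(\<Sum>k\<in>p1. g (Sup (snd k)) - g (Inf (snd k))) \<le> (\<Sum>k\<in>p1. norm (g (Sup (snd k)) - g (Inf (snd k))))"
        by (rule sum_mono) simp
      also have "\<dots> < \<epsilon>"
      proof (rule D[of p1 "\<lambda>k. Inf (snd k)" "\<lambda>k. Sup (snd k)", OF p12(3) _ _ meas1])
        show "\<forall>k\<in>p1. Inf (snd k) \<le> Sup (snd k) \<and> {Inf (snd k)..Sup (snd k)} \<subseteq> {a..b}"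
        proof
          fix k assume "k \<in> p1"
          then have kp: "(fst k, snd k) \<in> p" using p12 by auto
          have "Inf (snd k) \<le> Sup (snd k)" "snd k = {Inf (snd k)..Sup (snd k)}" "snd k \<subseteq> {a..b}"
            using ivp[OF kp] by blast+
          then show "Inf (snd k) \<le> Sup (snd k) \<and> {Inf (snd k)..Sup (snd k)} \<subseteq> {a..b}" by metis
        qed
        show "\<forall>k\<in>p1. \<forall>l\<in>p1. k \<noteq> l \<longrightarrow> {Inf (snd k)<..<Sup (snd k)} \<inter> {Inf (snd l)<..<Sup (snd l)} = {}"
        proof (intro ballI impI)
          fix k l assume k: "k \<in> p1" and l: "l \<in> p1" and kl: "k \<noteq> l"
          obtain x K where kk: "k = (x,K)" by fastforce
          obtain y L where ll: "l = (y,L)" by fastforce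
          have kp: "(x,K) \<in> p" and lp: "(y,L) \<in> p" using k l p12 kk ll by auto
          have dis: "interior K \<inter> interior L = {}"
            using tagged_division_ofD(5)[OF p(1) kp lp] kl kk ll by auto
          then show "{Inf (snd k)<..<Sup (snd k)} \<inter> {Inf (snd l)<..<Sup (snd l)} = {}"
            using clen(5)[OF kp] clen(5)[OF lp] kk ll by simp
        qed
      qed
      finally show ?thesis .
    qed
    have "g b - g a < \<epsilon> + \<epsilon> * (b - a)" using tot split sum1 sum2 by linarith
    then show ?thesis by (simp add: algebra_simps)
  qed
  show ?thesis
  proof (rule ccontr)
    assume "\<not> g b \<le> g a"
    then have pos: "g b - g a > 0" by simp
    have c: "1 + (b - a) > 0" using ab by simp
    let ?e = "(g b - g a) / (2 * (1 + (b - a)))"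
    have "?e > 0" using pos c by simp
    have eq: "?e * (1 + (b - a)) = (g b - g a) / 2" using c by (simp add: field_simps)
    from key[OF \<open>?e > 0\<close>] have "g b - g a \<le> (g b - g a) / 2" unfolding eq .
    then show False using pos by simp
  qed
qed


lemma ac_mono':
  fixes g :: "real \<Rightarrow> real"
  assumes ab: "a \<le> b" and ac: "abs_continuous_on {a..b} g" and N: "negligible N"
    and der: "\<And>x. x \<in> {a..b} - N \<Longrightarrow> \<exists>d. (g has_real_derivative d) (at x within {a..b}) \<and> d \<le> 0"
  shows "g b \<le> g a"
proof -
  define g' where "g' x = (SOME d. (g has_real_derivative d) (at x within {a..b}) \<and> d \<le> 0)" for x
  have "(g has_real_derivative g' x) (at x within {a..b}) \<and> g' x \<le> 0" if "x \<in> {a..b} - N" for x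
    unfolding g'_def using someI_ex[OF der[OF that]] .
  then show ?thesis using ac_mono[OF ab ac N, of g'] by blast
qed

lemma lip_real:
  fixes g :: "real \<Rightarrow> real"
  assumes "convex S" "\<And>x. x\<in>S \<Longrightarrow> (g has_real_derivative g' x) (at x within S)"
    "\<And>x. x\<in>S \<Longrightarrow> \<bar>g' x\<bar> \<le> B" "x\<in>S" "y\<in>S"
  shows "norm (g x - g y) \<le> B * norm (x - y)"
proof (rule differentiable_bound[OF assms(1), of g "\<lambda>x h. g' x * h" B x y])
  fix z assume z: "z \<in> S"
  show "(g has_derivative (\<lambda>h. g' z * h)) (at z within S)"
    using assms(2)[OF z] by (simp add: has_field_derivative_def)
  show "onorm (\<lambda>h. g' z * h) \<le> B"
    by (rule onorm_le) (use assms(3)[OF z] in \<open>auto simp: abs_mult intro: mult_right_mono\<close>)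
qed (use assms in auto)

lemma lip_grad:
  fixes f :: "'a::euclidean_space \<Rightarrow> real"
  assumes "\<And>x. (f has_derivative (\<lambda>h. h \<bullet> G x)) (at x)" "continuous_on UNIV G"
  obtains B where "B \<ge> 0" "\<And>x y. x \<in> cball 0 R \<Longrightarrow> y \<in> cball 0 R \<Longrightarrow> norm (f x - f y) \<le> B * norm (x - y)"
proof -
  have "compact (G ` cball 0 R)"
    by (rule compact_continuous_image) (use assms(2) continuous_on_subset in auto)
  then obtain B where B: "B > 0" "\<And>z. z \<in> G ` cball 0 R \<Longrightarrow> norm z \<le> B"
    using compact_imp_bounded bounded_pos by metis
  show ?thesis
  proof (rule that[of B])
    fix x y :: 'a assume xy: "x \<in> cball 0 R" "y \<in> cball 0 R"
    show "norm (f x - f y) \<le> B * norm (x - y)"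
    proof (rule differentiable_bound[of "cball 0 R" f "\<lambda>x h. h \<bullet> G x" B x y])
      fix z assume z: "z \<in> cball (0::'a) R"
      show "(f has_derivative (\<lambda>h. h \<bullet> G z)) (at z within cball 0 R)"
        using assms(1) by (rule has_derivative_at_withinI)
      show "onorm (\<lambda>h. h \<bullet> G z) \<le> B"
      proof (rule onorm_le)
        fix h :: 'a
        have "norm (h \<bullet> G z) \<le> norm h * norm (G z)" using Cauchy_Schwarz_ineq2 by simp
        also have "\<dots> \<le> norm h * B" using B(2)[of "G z"] z by (intro mult_left_mono) auto
        finally show "norm (h \<bullet> G z) \<le> B * norm h" by (simp add: mult.commute)
      qed
    qed (use xy in auto)
  qed (use B in auto)
qed

lemma ac_norm_sq:
  fixes V :: "real \<Rightarrow> 'a::real_normed_vector"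
  assumes "abs_continuous_on {c..d} V"
  shows "abs_continuous_on {c..d} (\<lambda>s. (norm (V s))\<^sup>2)"
proof -
  have "compact (V ` {c..d})"
    using ac_imp_continuous[OF assms] by (intro compact_continuous_image) auto
  then obtain R where R: "R > 0" "\<And>z. z \<in> V ` {c..d} \<Longrightarrow> norm z \<le> R"
    using compact_imp_bounded bounded_pos by metis
  have "norm ((norm (V x))\<^sup>2 - (norm (V y))\<^sup>2) \<le> (2 * R) * norm (V x - V y)"
    if xy: "x \<in> {c..d}" "y \<in> {c..d}" for x y
  proof -
    have nx: "norm (V x) \<le> R" and ny: "norm (V y) \<le> R" using R(2) xy by auto
    have "(norm (V x))\<^sup>2 - (norm (V y))\<^sup>2 = (norm (V x) - norm (V y)) * (norm (V x) + norm (V y))"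
      by (simp add: power2_eq_square algebra_simps)
    then have "\<bar>(norm (V x))\<^sup>2 - (norm (V y))\<^sup>2\<bar> = \<bar>norm (V x) - norm (V y)\<bar> * (norm (V x) + norm (V y))"
      by (simp add: abs_mult)
    also have "\<dots> \<le> norm (V x - V y) * (2 * R)"
      using nx ny norm_triangle_ineq3[of "V x" "V y"] by (intro mult_mono) auto
    finally show ?thesis by (simp add: mult.commute)
  qed
  then show ?thesis
    using ac_compose[OF assms, of "2 * R" "\<lambda>w. (norm w)\<^sup>2"] R by auto
qed

theorem mainTheorem7:
  fixes m :: nat
    and f :: "nat \<Rightarrow> 'a::euclidean_space \<Rightarrow> real"
    and gradf :: "nat \<Rightarrow> 'a \<Rightarrow> 'a"
    and L \<mu>s :: "nat \<Rightarrow> real"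
    and \<mu> \<gamma>0 :: real
    and x0 x1 :: 'a
    and \<gamma> :: "real \<Rightarrow> real"
    and X Z :: "real \<Rightarrow> 'a"
  assumes grad: "\<And>j x. j \<in> {1..m} \<Longrightarrow> GDERIV (f j) x :> gradf j x"
    and grad_cont: "\<And>j. j \<in> {1..m} \<Longrightarrow> continuous_on UNIV (gradf j)"
    and grad_lip: "\<And>j. j \<in> {1..m} \<Longrightarrow> (L j)-lipschitz_on UNIV (gradf j)"
    and sconv: "\<And>j. j \<in> {1..m} \<Longrightarrow> strongly_convex_grad (\<mu>s j) (f j) (gradf j)"
    and mu_bounds: "\<And>j. j \<in> {1..m} \<Longrightarrow> 0 \<le> \<mu>s j \<and> \<mu>s j \<le> L j"
    and mu_def: "\<mu> = Min (\<mu>s ` {1..m})"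
    and gamma0_pos: "\<gamma>0 > 0"
    and gamma_def: "\<And>t. \<gamma> t = \<mu> + (\<gamma>0 - \<mu>) * exp (- t)"
    and X_ac: "loc_abs_continuous_nonneg X"
    and Z_ac: "loc_abs_continuous_nonneg Z"
    and X0: "X 0 = x0"
    and Z0: "Z 0 = x0 + x1"
    and ode: "AE t in lborel. t > 0 \<longrightarrow>
               (X has_vector_derivative (Z t - X t)) (at t) \<and>
               (\<exists>Z'. (Z has_vector_derivative Z') (at t) \<and>
                  \<gamma> t *\<^sub>R Z' \<in> (\<lambda>v. \<mu> *\<^sub>R (X t - Z t) - v) `
                     argmin_inner (X t - Z t) (convex hull ((\<lambda>j. gradf j (X t)) ` {1..m})))"
  shows "\<forall>j\<in>{1..m}. \<forall>t>0.
           f j (X t) + \<gamma> t / 2 * (norm (Z t - X t))\<^sup>2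
             + 1/2 * integral {0..t} (\<lambda>s. (\<mu> + 3 * \<gamma> s) * (norm (Z s - X s))\<^sup>2)
           \<le> f j x0 + \<gamma>0 / 2 * (norm x1)\<^sup>2"
proof (intro ballI allI impI)
  fix j and t :: real
  assume j: "j \<in> {1..m}" and t: "t > 0"
  define V where "V s = Z s - X s" for s
  have acX: "abs_continuous_on {0..t} X" using X_ac t unfolding loc_abs_continuous_nonneg_def by auto
  have acZ: "abs_continuous_on {0..t} Z" using Z_ac t unfolding loc_abs_continuous_nonneg_def by auto
  have acV: "abs_continuous_on {0..t} V" unfolding V_def by (rule ac_diff[OF acZ acX])
  have cX: "continuous_on {0..t} X" by (rule ac_imp_continuous[OF acX])
  have cV: "continuous_on {0..t} V" by (rule ac_imp_continuous[OF acV])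
  have geq: "\<gamma> = (\<lambda>s. \<mu> + (\<gamma>0 - \<mu>) * exp (- s))" using gamma_def by (intro ext) simp
  define \<phi> where "\<phi> s = (\<mu> + 3 * \<gamma> s) * (norm (V s))\<^sup>2" for s
  have c\<phi>: "continuous_on {0..t} \<phi>"
    unfolding \<phi>_def geq by (intro continuous_intros cV)
  define E where "E s = f j (X s) + \<gamma> s / 2 * (norm (V s))\<^sup>2 + 1/2 * integral {0..s} \<phi>" for s
  have "compact (X ` {0..t})" using cX by (intro compact_continuous_image) auto
  then obtain R where R: "R > 0" "\<And>z. z \<in> X ` {0..t} \<Longrightarrow> norm z \<le> R"
    using compact_imp_bounded bounded_pos by metis
  have gd: "\<And>x. (f j has_derivative (\<lambda>h. h \<bullet> gradf j x)) (at x)"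
    using grad[OF j] unfolding gderiv_def by blast
  obtain B where B: "B \<ge> 0" "\<And>x y. x \<in> cball 0 R \<Longrightarrow> y \<in> cball 0 R \<Longrightarrow> norm (f j x - f j y) \<le> B * norm (x - y)"
    using lip_grad[OF gd grad_cont[OF j]] by blast
  have ac1: "abs_continuous_on {0..t} (\<lambda>s. f j (X s))"
  proof (rule ac_compose[OF acX B(1)])
    fix x y assume "x \<in> {0..t}" "y \<in> {0..t}"
    then have "X x \<in> cball 0 R" "X y \<in> cball 0 R" using R(2) by auto
    then show "norm (f j (X x) - f j (X y)) \<le> B * norm (X x - X y)" by (rule B(2))
  qed
  have acg: "abs_continuous_on {0..t} (\<lambda>s. \<gamma> s / 2)"
  proof (rule lipschitz_imp_ac[of "\<bar>\<gamma>0 - \<mu>\<bar> / 2"])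
    fix x y assume xy: "x \<in> {0..t}" "y \<in> {0..t}"
    show "norm (\<gamma> x / 2 - \<gamma> y / 2) \<le> \<bar>\<gamma>0 - \<mu>\<bar> / 2 * norm (x - y)"
    proof (rule lip_real[of "{0..t}" _ "\<lambda>s. - (\<gamma>0 - \<mu>) * exp (- s) / 2"])
      fix z assume z: "z \<in> {0..t}"
      show "((\<lambda>s. \<gamma> s / 2) has_real_derivative - (\<gamma>0 - \<mu>) * exp (- z) / 2) (at z within {0..t})"
        unfolding geq by (auto intro!: derivative_eq_intros simp: field_simps)
      have "exp (- z) \<le> 1" using z by simp
      then have "\<bar>\<gamma>0 - \<mu>\<bar> * exp (- z) \<le> \<bar>\<gamma>0 - \<mu>\<bar> * 1"
        by (intro mult_left_mono) auto
      moreover have "\<bar>- (\<gamma>0 - \<mu>) * exp (- z) / 2\<bar> = \<bar>\<gamma>0 - \<mu>\<bar> * exp (- z) / 2"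
        by (simp add: abs_mult abs_minus_commute)
      ultimately show "\<bar>- (\<gamma>0 - \<mu>) * exp (- z) / 2\<bar> \<le> \<bar>\<gamma>0 - \<mu>\<bar> / 2"
        by simp
    qed (use xy in auto)
  qed simp
  have ac2: "abs_continuous_on {0..t} (\<lambda>s. \<gamma> s / 2 * (norm (V s))\<^sup>2)"
    by (rule ac_mult[OF acg ac_norm_sq[OF acV]])
  have "compact (\<phi> ` {0..t})" using c\<phi> by (intro compact_continuous_image) auto
  then obtain M where M: "M > 0" "\<And>z. z \<in> \<phi> ` {0..t} \<Longrightarrow> norm z \<le> M"
    using compact_imp_bounded bounded_pos by metis
  have dI: "((\<lambda>s. 1/2 * integral {0..s} \<phi>) has_real_derivative 1/2 * \<phi> z) (at z within {0..t})"
    if "z \<in> {0..t}" for z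
    using integral_has_real_derivative[OF c\<phi> that] by (intro DERIV_cmult)
  have ac3: "abs_continuous_on {0..t} (\<lambda>s. 1/2 * integral {0..s} \<phi>)"
  proof (rule lipschitz_imp_ac[of "M / 2"])
    fix x y assume xy: "x \<in> {0..t}" "y \<in> {0..t}"
    show "norm (1/2 * integral {0..x} \<phi> - 1/2 * integral {0..y} \<phi>) \<le> M / 2 * norm (x - y)"
    proof (rule lip_real[of "{0..t}" _ "\<lambda>s. 1/2 * \<phi> s"])
      fix z assume z: "z \<in> {0..t}"
      show "((\<lambda>s. 1/2 * integral {0..s} \<phi>) has_real_derivative 1/2 * \<phi> z) (at z within {0..t})"
        by (rule dI[OF z])
      show "\<bar>1/2 * \<phi> z\<bar> \<le> M / 2" using M(2)[of "\<phi> z"] z by auto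
    qed (use xy in auto)
  qed (use M in simp)
  have acE: "abs_continuous_on {0..t} E"
  proof -
    have "abs_continuous_on {0..t} (\<lambda>s. (f j (X s) + \<gamma> s / 2 * (norm (V s))\<^sup>2) + 1/2 * integral {0..s} \<phi>)"
      by (rule ac_add[OF ac_add[OF ac1 ac2] ac3])
    then show ?thesis unfolding E_def[abs_def] .
  qed
  obtain N0 where N0: "\<And>x. x \<in> space lborel - N0 \<Longrightarrow> (x > 0 \<longrightarrow>
               (X has_vector_derivative (Z x - X x)) (at x) \<and>
               (\<exists>Z'. (Z has_vector_derivative Z') (at x) \<and>
                  \<gamma> x *\<^sub>R Z' \<in> (\<lambda>v. \<mu> *\<^sub>R (X x - Z x) - v) `
                     argmin_inner (X x - Z x) (convex hull ((\<lambda>j. gradf j (X x)) ` {1..m}))))"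
    and N0n: "N0 \<in> null_sets lborel"
    using AE_E3[OF ode] by blast
  have negN0: "negligible N0"
    unfolding negligible_iff_null_sets using null_sets_completionI[OF N0n] .
  define N where "N = N0 \<union> {0, t}"
  have negN: "negligible N" unfolding N_def using negN0 by (simp add: negligible_Un)
  have der: "\<exists>d. (E has_real_derivative d) (at s within {0..t}) \<and> d \<le> 0" if s: "s \<in> {0..t} - N" for s
  proof -
    have s0: "0 < s" "s < t" "s \<notin> N0" using s unfolding N_def by auto
    from N0[of s] s0 obtain Z' where hX: "(X has_vector_derivative (Z s - X s)) (at s)"
      and hZ: "(Z has_vector_derivative Z') (at s)"
      and hv: "\<gamma> s *\<^sub>R Z' \<in> (\<lambda>v. \<mu> *\<^sub>R (X s - Z s) - v) `
                     argmin_inner (X s - Z s) (convex hull ((\<lambda>j. gradf j (X s)) ` {1..m}))"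
      by auto
    from hv obtain v where v1: "\<gamma> s *\<^sub>R Z' = \<mu> *\<^sub>R (X s - Z s) - v"
      and v2: "v \<in> argmin_inner (X s - Z s) (convex hull ((\<lambda>j. gradf j (X s)) ` {1..m}))"
      by blast
    let ?G = "gradf j (X s)"
    have hXd: "(X has_derivative (\<lambda>h. h *\<^sub>R V s)) (at s)"
      using hX unfolding has_vector_derivative_def V_def .
    have hVv: "(V has_vector_derivative (Z' - V s)) (at s)"
      unfolding V_def[abs_def] using has_vector_derivative_diff[OF hZ hX] by simp
    have hVd: "(V has_derivative (\<lambda>h. h *\<^sub>R (Z' - V s))) (at s)"
      using hVv unfolding has_vector_derivative_def .
    have d1: "((\<lambda>s. f j (X s)) has_real_derivative (V s \<bullet> ?G)) (at s)"
    proof (rule has_derivative_imp_has_field_derivative)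
      show "((\<lambda>s. f j (X s)) has_derivative (\<lambda>h. (h *\<^sub>R V s) \<bullet> ?G)) (at s)"
        using has_derivative_compose[OF hXd gd] .
      fix h show "h * (V s \<bullet> ?G) = (h *\<^sub>R V s) \<bullet> ?G" by (simp add: inner_scaleR_left)
    qed
    have d2: "((\<lambda>s. \<gamma> s / 2) has_real_derivative - (\<gamma>0 - \<mu>) * exp (- s) / 2) (at s)"
      unfolding geq by (auto intro!: derivative_eq_intros simp: field_simps)
    have d3: "((\<lambda>s. (norm (V s))\<^sup>2) has_real_derivative 2 * (V s \<bullet> (Z' - V s))) (at s)"
    proof -
      have "((\<lambda>s. V s \<bullet> V s) has_derivative (\<lambda>h. V s \<bullet> (h *\<^sub>R (Z' - V s)) + (h *\<^sub>R (Z' - V s)) \<bullet> V s)) (at s)"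
        using has_derivative_inner[OF hVd hVd] .
      then have "((\<lambda>s. V s \<bullet> V s) has_real_derivative 2 * (V s \<bullet> (Z' - V s))) (at s)"
        by (rule has_derivative_imp_has_field_derivative)
           (simp add: inner_scaleR_left inner_scaleR_right inner_commute algebra_simps)
      then show ?thesis by (simp add: power2_norm_eq_inner)
    qed
    have dE: "(E has_real_derivative
        (V s \<bullet> ?G + (- (\<gamma>0 - \<mu>) * exp (- s) / 2 * (norm (V s))\<^sup>2 + 2 * (V s \<bullet> (Z' - V s)) * (\<gamma> s / 2))
          + 1/2 * \<phi> s)) (at s within {0..t})"
      unfolding E_def[abs_def]
      by (intro DERIV_add DERIV_mult has_field_derivative_at_within[OF d1]
          has_field_derivative_at_within[OF d2] has_field_derivative_at_within[OF d3] dI)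
         (use s in auto)
    define n where "n = (norm (V s))\<^sup>2"
    define c where "c = V s \<bullet> Z'"
    define w where "w = V s \<bullet> v"
    define q where "q = V s \<bullet> ?G"
    have XZ: "X s - Z s = - V s" unfolding V_def by simp
    have nn: "V s \<bullet> V s = n" unfolding n_def by (simp add: power2_norm_eq_inner)
    have hc: "\<gamma> s * c = - \<mu> * n - w"
    proof -
      have "V s \<bullet> (\<gamma> s *\<^sub>R Z') = V s \<bullet> (\<mu> *\<^sub>R (X s - Z s) - v)" using v1 by simp
      then show ?thesis unfolding c_def w_def XZ using nn
        by (simp add: inner_diff_right inner_scaleR_right inner_minus_right)
    qed
    have hq: "q \<le> w"
    proof -
      have "?G \<in> convex hull ((\<lambda>j. gradf j (X s)) ` {1..m})"
        by (rule hull_inc) (use j in auto)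
      then have "(X s - Z s) \<bullet> v \<le> (X s - Z s) \<bullet> ?G"
        using v2 unfolding argmin_inner_def by blast
      then show ?thesis unfolding q_def w_def XZ by (simp add: inner_minus_left)
    qed
    have gs: "\<gamma> s = \<mu> + (\<gamma>0 - \<mu>) * exp (- s)" by (rule gamma_def)
    have inZ: "V s \<bullet> (Z' - V s) = c - n" unfolding c_def using nn by (simp add: inner_diff_right)
    have "V s \<bullet> ?G + (- (\<gamma>0 - \<mu>) * exp (- s) / 2 * (norm (V s))\<^sup>2 + 2 * (V s \<bullet> (Z' - V s)) * (\<gamma> s / 2))
          + 1/2 * \<phi> s = q + (- (\<gamma>0 - \<mu>) * exp (- s) / 2 * n + 2 * (c - n) * (\<gamma> s / 2))
          + 1/2 * ((\<mu> + 3 * \<gamma> s) * n)"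
      unfolding q_def n_def \<phi>_def inZ by simp
    also have "\<dots> = q - w" using hc gs by algebra
    finally have "V s \<bullet> ?G + (- (\<gamma>0 - \<mu>) * exp (- s) / 2 * (norm (V s))\<^sup>2 + 2 * (V s \<bullet> (Z' - V s)) * (\<gamma> s / 2))
          + 1/2 * \<phi> s \<le> 0" using hq by simp
    with dE show ?thesis by blast
  qed
  have "E t \<le> E 0"
    by (rule ac_mono'[OF _ acE negN der]) (use t in auto)
  moreover have "E 0 = f j x0 + \<gamma>0 / 2 * (norm x1)\<^sup>2"
    unfolding E_def V_def using X0 Z0 gamma_def[of 0] by simp
  ultimately show "f j (X t) + \<gamma> t / 2 * (norm (Z t - X t))\<^sup>2
             + 1/2 * integral {0..t} (\<lambda>s. (\<mu> + 3 * \<gamma> s) * (norm (Z s - X s))\<^sup>2)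
           \<le> f j x0 + \<gamma>0 / 2 * (norm x1)\<^sup>2"
    unfolding E_def V_def \<phi>_def[abs_def] by simp
qed

end
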